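(* Let $\alpha\ge2$ be an integer, $\Delta\ge3$ an integer, and $\beta_\mu>\beta_\nu\ge\frac{\Delta-2}{\Delta}$ with $\beta:=(\beta_\nu/\beta_\mu)^\alpha\beta_\mu<\frac{\Delta-2}{\Delta}$. For every $\Delta$-regular graph $G=(V,E)$, letting $\nu,\mu$ be the Gibbs distributions of $(G,\beta_\nu)$ and $(G,\beta_\mu)$, $$Z(G,\beta)\ \le\ \frac{Z(G,\beta_\nu)^\alpha}{Z(G,\beta_\mu)^{\alpha-1}}\sum_{\sigma\in\{-1,+1\}^V}\mu(\sigma)\left(\frac{\nu(\sigma)}{\mu(\sigma)}+1\right)^\alpha\ \le\ 3^\alpha Z(G,\beta).$$
   Context: For a graph $G=(V,E)$ and $\gamma>0$, the Ising model $(G,\gamma)$ has Gibbs distribution on $\{-1,+1\}^V$ given by $\pi(\sigma)=\gamma^{m(\sigma)}/Z(G,\gamma)$, where $m(\sigma)=|\{\{u,v\}\in E:\sigma_u=\sigma_v\}|$ and $Z(G,\gamma)=\sum_{\sigma\in\{-1,+1\}^V}\gamma^{m(\sigma)}$. *)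

theory Defs
  imports Complex_Main "HOL-Library.FuncSet"
begin

definition simple_graph :: "'a set \<Rightarrow> 'a set set \<Rightarrow> bool" where
  "simple_graph V E \<longleftrightarrow> finite V \<and> (\<forall>e\<in>E. e \<subseteq> V \<and> card e = 2)"

definition degree :: "'a set set \<Rightarrow> 'a \<Rightarrow> nat" where
  "degree E v = card {e\<in>E. v \<in> e}"

definition regular_graph :: "nat \<Rightarrow> 'a set \<Rightarrow> 'a set set \<Rightarrow> bool" where
  "regular_graph \<Delta> V E \<longleftrightarrow> simple_graph V E \<and> (\<forall>v\<in>V. degree E v = \<Delta>)"

definition spins :: "'a set \<Rightarrow> ('a \<Rightarrow> int) set" where
  "spins V = PiE V (\<lambda>_. {-1, 1})"

definition mono_edges :: "'a set set \<Rightarrow> ('a \<Rightarrow> int) \<Rightarrow> nat" where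
  "mono_edges E \<sigma> = card {e\<in>E. \<exists>u v. e = {u, v} \<and> \<sigma> u = \<sigma> v}"

definition ising_Z :: "'a set \<Rightarrow> 'a set set \<Rightarrow> real \<Rightarrow> real" where
  "ising_Z V E \<gamma> = (\<Sum>\<sigma>\<in>spins V. \<gamma> ^ mono_edges E \<sigma>)"

definition ising_gibbs :: "'a set \<Rightarrow> 'a set set \<Rightarrow> real \<Rightarrow> ('a \<Rightarrow> int) \<Rightarrow> real" where
  "ising_gibbs V E \<gamma> \<sigma> = \<gamma> ^ mono_edges E \<sigma> / ising_Z V E \<gamma>"

end

theory Submission
  imports Defs
begin

lemma amgm_aux:
  fixes x y :: real
  assumes x: "x \<ge> 0" and y: "y \<ge> 0"
  shows "real (Suc k) * x ^ k * y \<le> real k * x ^ Suc k + y ^ Suc k"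
proof -
  define S where "S = (\<Sum>p<Suc k. y ^ p * x ^ (k - p))"
  have d: "y ^ Suc k - x ^ Suc k = (y - x) * S"
    unfolding S_def by (rule diff_power_eq_sum)
  have key: "(y - x) * (S - real (Suc k) * x ^ k) \<ge> 0"
  proof (cases "x \<le> y")
    case True
    have "\<And>p. p < Suc k \<Longrightarrow> x ^ k \<le> y ^ p * x ^ (k - p)"
    proof -
      fix p assume "p < Suc k"
      hence "x ^ k = x ^ p * x ^ (k - p)" by (simp add: power_add[symmetric])
      also have "\<dots> \<le> y ^ p * x ^ (k - p)"
        by (rule mult_right_mono) (use True x in \<open>auto intro: power_mono\<close>)
      finally show "x ^ k \<le> y ^ p * x ^ (k - p)" .
    qed
    hence "(\<Sum>p<Suc k. x ^ k) \<le> S" unfolding S_def by (intro sum_mono) auto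
    hence "S - real (Suc k) * x ^ k \<ge> 0" by simp
    thus ?thesis using True by simp
  next
    case False
    have "\<And>p. p < Suc k \<Longrightarrow> y ^ p * x ^ (k - p) \<le> x ^ k"
    proof -
      fix p assume "p < Suc k"
      hence "x ^ k = x ^ p * x ^ (k - p)" by (simp add: power_add[symmetric])
      moreover have "y ^ p * x ^ (k - p) \<le> x ^ p * x ^ (k - p)"
        by (rule mult_right_mono) (use False x y in \<open>auto intro: power_mono\<close>)
      ultimately show "y ^ p * x ^ (k - p) \<le> x ^ k" by simp
    qed
    hence "S \<le> (\<Sum>p<Suc k. x ^ k)" unfolding S_def by (intro sum_mono) auto
    hence "S - real (Suc k) * x ^ k \<le> 0" by simp
    thus ?thesis using False by (simp add: mult_nonpos_nonpos)
  qed
  have "y ^ Suc k - x ^ Suc k - real (Suc k) * x ^ k * (y - x) \<ge> 0"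
    using key d by (simp add: algebra_simps)
  thus ?thesis by (simp add: algebra_simps)
qed

lemma amgm:
  fixes x y :: real
  assumes "x \<ge> 0" "y \<ge> 0" "n \<ge> 1"
  shows "real n * x ^ (n - 1) * y \<le> real (n - 1) * x ^ n + y ^ n"
  using amgm_aux[OF assms(1,2), of "n - 1"] assms(3) by simp

lemma pow_sum_le:
  fixes a b :: real
  assumes "a \<ge> 0" "b \<ge> 0"
  shows "(a + b) ^ n \<le> 2 ^ n * (a ^ n + b ^ n)"
proof -
  have "(a + b) ^ n \<le> (2 * max a b) ^ n"
    by (rule power_mono) (use assms in auto)
  also have "\<dots> = 2 ^ n * max a b ^ n" by (simp add: power_mult_distrib)
  also have "max a b ^ n \<le> a ^ n + b ^ n"
    using assms by (cases "a \<le> b") (auto simp: max_def)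
  hence "2 ^ n * max a b ^ n \<le> 2 ^ n * (a ^ n + b ^ n)" by simp
  finally show ?thesis .
qed

lemma Z_pos:
  assumes "finite V" "\<gamma> > 0"
  shows "ising_Z V E \<gamma> > 0"
proof -
  have fin: "finite (spins V)" unfolding spins_def using assms(1) by (intro finite_PiE) auto
  have "(\<lambda>v. if v \<in> V then 1 else undefined) \<in> spins V" unfolding spins_def by auto
  hence ne: "spins V \<noteq> {}" by auto
  show ?thesis unfolding ising_Z_def using fin ne assms(2) by (intro sum_pos) auto
qed

theorem lemma7p4:
  fixes V :: "'a set" and E :: "'a set set"
    and \<alpha> \<Delta> :: nat and \<beta>\<mu> \<beta>\<nu> \<beta> :: real
  assumes "\<alpha> \<ge> 2" and "\<Delta> \<ge> 3"
    and "\<beta>\<mu> > \<beta>\<nu>" and "\<beta>\<nu> \<ge> (real \<Delta> - 2) / real \<Delta>"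
    and "\<beta> = (\<beta>\<nu> / \<beta>\<mu>) ^ \<alpha> * \<beta>\<mu>"
    and "\<beta> < (real \<Delta> - 2) / real \<Delta>"
    and "regular_graph \<Delta> V E"
  shows "ising_Z V E \<beta>
           \<le> ising_Z V E \<beta>\<nu> ^ \<alpha> / ising_Z V E \<beta>\<mu> ^ (\<alpha> - 1) *
              (\<Sum>\<sigma>\<in>spins V. ising_gibbs V E \<beta>\<mu> \<sigma> *
                 (ising_gibbs V E \<beta>\<nu> \<sigma> / ising_gibbs V E \<beta>\<mu> \<sigma> + 1) ^ \<alpha>)
       \<and> ising_Z V E \<beta>\<nu> ^ \<alpha> / ising_Z V E \<beta>\<mu> ^ (\<alpha> - 1) *
              (\<Sum>\<sigma>\<in>spins V. ising_gibbs V E \<beta>\<mu> \<sigma> *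
                 (ising_gibbs V E \<beta>\<nu> \<sigma> / ising_gibbs V E \<beta>\<mu> \<sigma> + 1) ^ \<alpha>)
         \<le> 3 ^ \<alpha> * ising_Z V E \<beta>"
proof -
  have fin: "finite V" using assms(7) unfolding regular_graph_def simple_graph_def by auto
  have "(real \<Delta> - 2) / real \<Delta> > 0" using assms(2) by simp
  hence bn: "\<beta>\<nu> > 0" using assms(4) by linarith
  hence bm: "\<beta>\<mu> > 0" using assms(3) by linarith
  have b: "\<beta> > 0" using assms(5) bn bm by simp
  define m where "m = mono_edges E"
  define Zn where "Zn = ising_Z V E \<beta>\<nu>"
  define Zm where "Zm = ising_Z V E \<beta>\<mu>"
  define Zb where "Zb = ising_Z V E \<beta>"
  define c where "c = Zn / Zm"
  define t where "t = (\<lambda>\<sigma>. (\<beta>\<nu> / \<beta>\<mu>) ^ m \<sigma>)"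
  have Zn: "Zn > 0" unfolding Zn_def using Z_pos[OF fin bn] .
  have Zm: "Zm > 0" unfolding Zm_def using Z_pos[OF fin bm] .
  have c: "c > 0" unfolding c_def using Zn Zm by simp
  have t: "t \<sigma> > 0" for \<sigma> unfolding t_def using bn bm by simp
  have Zm_def': "Zm = (\<Sum>\<sigma>\<in>spins V. \<beta>\<mu> ^ m \<sigma>)" unfolding Zm_def ising_Z_def m_def ..
  have Zn_def': "Zn = (\<Sum>\<sigma>\<in>spins V. \<beta>\<mu> ^ m \<sigma> * t \<sigma>)"
    unfolding Zn_def ising_Z_def m_def t_def using bm
    by (intro sum.cong) (auto simp: power_divide)
  have bt: "\<beta> ^ m \<sigma> = \<beta>\<mu> ^ m \<sigma> * t \<sigma> ^ \<alpha>" for \<sigma>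
    unfolding t_def assms(5) by (simp add: power_mult_distrib power_mult[symmetric] mult.commute)
  have Zb_def': "Zb = (\<Sum>\<sigma>\<in>spins V. \<beta>\<mu> ^ m \<sigma> * t \<sigma> ^ \<alpha>)"
    unfolding Zb_def ising_Z_def m_def[symmetric] using bt by simp
  define T where "T = ising_Z V E \<beta>\<nu> ^ \<alpha> / ising_Z V E \<beta>\<mu> ^ (\<alpha> - 1) *
              (\<Sum>\<sigma>\<in>spins V. ising_gibbs V E \<beta>\<mu> \<sigma> *
                 (ising_gibbs V E \<beta>\<nu> \<sigma> / ising_gibbs V E \<beta>\<mu> \<sigma> + 1) ^ \<alpha>)"
  have T: "T = (\<Sum>\<sigma>\<in>spins V. \<beta>\<mu> ^ m \<sigma> * (t \<sigma> + c) ^ \<alpha>)"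
  proof -
    have "T = (\<Sum>\<sigma>\<in>spins V. Zn ^ \<alpha> / Zm ^ (\<alpha> - 1) * (\<beta>\<mu> ^ m \<sigma> / Zm *
                 ((\<beta>\<nu> ^ m \<sigma> / Zn) / (\<beta>\<mu> ^ m \<sigma> / Zm) + 1) ^ \<alpha>))"
      unfolding T_def sum_distrib_left ising_gibbs_def Zn_def Zm_def m_def ..
    also have "\<dots> = (\<Sum>\<sigma>\<in>spins V. \<beta>\<mu> ^ m \<sigma> * (t \<sigma> + c) ^ \<alpha>)"
    proof (intro sum.cong refl)
      fix \<sigma>
      have a: "Zn ^ \<alpha> / Zm ^ (\<alpha> - 1) / Zm = (Zn / Zm) ^ \<alpha>"
        using assms(1) Zm by (cases \<alpha>) (auto simp: power_divide)
      have e: "(\<beta>\<nu> ^ m \<sigma> / Zn) / (\<beta>\<mu> ^ m \<sigma> / Zm) + 1 = (t \<sigma> + c) / c"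
        unfolding t_def c_def using Zn Zm bm by (simp add: field_simps power_divide)
      have "Zn ^ \<alpha> / Zm ^ (\<alpha> - 1) * (\<beta>\<mu> ^ m \<sigma> / Zm * ((t \<sigma> + c) / c) ^ \<alpha>)
            = \<beta>\<mu> ^ m \<sigma> * (c ^ \<alpha> * ((t \<sigma> + c) / c) ^ \<alpha>)"
      proof -
        have "Zn ^ \<alpha> / Zm ^ (\<alpha> - 1) * (\<beta>\<mu> ^ m \<sigma> / Zm * ((t \<sigma> + c) / c) ^ \<alpha>)
            = (Zn ^ \<alpha> / Zm ^ (\<alpha> - 1) / Zm) * (\<beta>\<mu> ^ m \<sigma> * ((t \<sigma> + c) / c) ^ \<alpha>)"
          by simp
        also have "\<dots> = c ^ \<alpha> * (\<beta>\<mu> ^ m \<sigma> * ((t \<sigma> + c) / c) ^ \<alpha>)"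
          unfolding a c_def ..
        finally show ?thesis by simp
      qed
      also have "\<dots> = \<beta>\<mu> ^ m \<sigma> * (t \<sigma> + c) ^ \<alpha>"
        using c by (simp add: power_divide)
      finally show "Zn ^ \<alpha> / Zm ^ (\<alpha> - 1) * (\<beta>\<mu> ^ m \<sigma> / Zm *
                 ((\<beta>\<nu> ^ m \<sigma> / Zn) / (\<beta>\<mu> ^ m \<sigma> / Zm) + 1) ^ \<alpha>)
            = \<beta>\<mu> ^ m \<sigma> * (t \<sigma> + c) ^ \<alpha>" using e by simp
    qed
    finally show ?thesis .
  qed
  have lower: "Zb \<le> T"
    unfolding T Zb_def'
  proof (intro sum_mono mult_left_mono)
    fix \<sigma> show "t \<sigma> ^ \<alpha> \<le> (t \<sigma> + c) ^ \<alpha>" using t[of \<sigma>] c by (intro power_mono) auto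
  qed (use bm in auto)
  have key: "Zm * c ^ \<alpha> \<le> Zb"
  proof -
    have pt: "\<beta>\<mu> ^ m \<sigma> * (real \<alpha> * c ^ (\<alpha> - 1) * t \<sigma>)
          \<le> \<beta>\<mu> ^ m \<sigma> * (real (\<alpha> - 1) * c ^ \<alpha> + t \<sigma> ^ \<alpha>)" for \<sigma>
      using amgm[of c "t \<sigma>" \<alpha>] c t[of \<sigma>] assms(1) bm by (intro mult_left_mono) auto
    have "(\<Sum>\<sigma>\<in>spins V. \<beta>\<mu> ^ m \<sigma> * (real \<alpha> * c ^ (\<alpha> - 1) * t \<sigma>))
          \<le> (\<Sum>\<sigma>\<in>spins V. \<beta>\<mu> ^ m \<sigma> * (real (\<alpha> - 1) * c ^ \<alpha> + t \<sigma> ^ \<alpha>))"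
      by (intro sum_mono pt)
    hence "real \<alpha> * c ^ (\<alpha> - 1) * Zn \<le> real (\<alpha> - 1) * c ^ \<alpha> * Zm + Zb"
      unfolding Zn_def' Zm_def' Zb_def'
      by (simp add: sum_distrib_left sum.distrib algebra_simps)
    moreover have "c ^ (\<alpha> - 1) * Zn = c ^ \<alpha> * Zm"
    proof -
      have "Zn = c * Zm" unfolding c_def using Zm by simp
      thus ?thesis using assms(1) by (cases \<alpha>) auto
    qed
    ultimately have "real \<alpha> * (c ^ \<alpha> * Zm) \<le> real (\<alpha> - 1) * (c ^ \<alpha> * Zm) + Zb"
      by (metis mult.assoc mult.commute)
    moreover have "real (\<alpha> - 1) = real \<alpha> - 1" using assms(1) by simp
    ultimately show ?thesis by (simp add: algebra_simps)
  qed
  have upper: "T \<le> 3 ^ \<alpha> * Zb"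
  proof -
    have "T \<le> (\<Sum>\<sigma>\<in>spins V. \<beta>\<mu> ^ m \<sigma> * (2 ^ \<alpha> * (t \<sigma> ^ \<alpha> + c ^ \<alpha>)))"
      unfolding T using bm c t by (intro sum_mono mult_left_mono pow_sum_le) (auto intro: less_imp_le)
    also have "\<dots> = 2 ^ \<alpha> * (Zb + Zm * c ^ \<alpha>)"
      unfolding Zb_def' Zm_def'
      by (simp add: sum_distrib_left sum_distrib_right sum.distrib algebra_simps)
    also have "\<dots> \<le> 2 ^ \<alpha> * (2 * Zb)" using key by simp
    also have "\<dots> = 2 ^ Suc \<alpha> * Zb" by simp
    also have "\<dots> \<le> 3 ^ \<alpha> * Zb"
    proof (rule mult_right_mono)
      have "(2::nat) ^ Suc \<alpha> \<le> 3 ^ \<alpha>" using assms(1)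
      proof (induction \<alpha> rule: dec_induct)
        case base then show ?case by simp
      next
        case (step n) then show ?case by simp
      qed
      thus "(2::real) ^ Suc \<alpha> \<le> 3 ^ \<alpha>"
        by (metis of_nat_le_iff of_nat_numeral of_nat_power)
      show "0 \<le> Zb" using lower T c bm t by (simp add: Zb_def' sum_nonneg less_imp_le)
    qed
    finally show ?thesis .
  qed
  show ?thesis using lower upper unfolding T_def Zb_def Zn_def Zm_def by simp
qed

end
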